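(* Let $q \geq 1$ and let $k$ be a positive integer with $k < n$. Let $\boldsymbol{B} = [\boldsymbol{B}[1] \ \cdots \ \boldsymbol{B}[n]] \in \mathbb{R}^{D \times N}$ be a dictionary with unit-norm columns, blocks $\boldsymbol{B}[i] \in \mathbb{R}^{D \times m_i}$, and pairwise disjoint block subspaces $\mathcal{S}_i = \operatorname{span}(\boldsymbol{B}[i])$. Assume that every signal $\boldsymbol{y} \in \mathbb{R}^D$ that admits a $k$-block-sparse representation admits a unique one. For an index set $\Lambda \subseteq \{1,\dots,n\}$ and $\boldsymbol{x} \in \bigoplus_{i \in \Lambda} \mathcal{S}_i$ let $$W_\Lambda(\boldsymbol{x}) = \min\Big\{ \sum_{i \in \Lambda} \|\boldsymbol{B}[i]\boldsymbol{c}[i]\|_q \;:\; \boldsymbol{x} = \sum_{i \in \Lambda} \boldsymbol{B}[i]\boldsymbol{c}[i] \Big\}.$$ Then the following are equivalent: (i) for every $\Lambda_k \subseteq \{1,\dots,n\}$ with $|\Lambda_k| = k$ and every $\boldsymbol{y} \in \bigoplus_{i \in \Lambda_k} \mathcal{S}_i$, every optimal solution $\boldsymbol{c}^*$ of $P'_{\ell_q/\ell_1}(\boldsymbol{y})$ satisfies $\boldsymbol{B}[i]\boldsymbol{c}^*[i] = \boldsymbol{0}$ for all $i \notin \Lambda_k$ (i.e. the solution of $P'_{\ell_q/\ell_1}$ coincides with that of $P'_{\ell_q/\ell_0}$); (ii) for every $\Lambda_k$ with $|\Lambda_k| = k$, writing $\widehat{\Lambda}_k = \{1,\dots,n\}\setminus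 \Lambda_k$, and every nonzero $\boldsymbol{x} \in \big(\bigoplus_{i \in \Lambda_k} \mathcal{S}_i\big) \cap \big(\bigoplus_{i \in \widehat{\Lambda}_k} \mathcal{S}_i\big)$, one has $W_{\Lambda_k}(\boldsymbol{x}) < W_{\widehat{\Lambda}_k}(\boldsymbol{x})$.
   Context: The dictionary $\boldsymbol{B} \in \mathbb{R}^{D\times N}$ has columns of unit Euclidean norm and is partitioned into $n$ blocks $\boldsymbol{B}[i] \in \mathbb{R}^{D \times m_i}$; blocks may have linearly dependent columns. $\mathcal{S}_i$ is the column span of $\boldsymbol{B}[i]$, and $\mathcal{S}_i \cap \mathcal{S}_j = \{0\}$ for $i \neq j$. A vector $\boldsymbol{c} \in \mathbb{R}^N$ is written $\boldsymbol{c} = (\boldsymbol{c}[1]; \dots; \boldsymbol{c}[n])$ with $\boldsymbol{c}[i] \in \mathbb{R}^{m_i}$. A $k$-block-sparse representation of $\boldsymbol{y}$ is an expression $\boldsymbol{y} = \sum_{i \in \Lambda} \boldsymbol{s}_i$ with $|\Lambda| \le k$ and $\boldsymbol{s}_i \in \mathcal{S}_i \setminus \{0\}$; it is unique if any two such expressions have the same $\Lambda$ and the same $\boldsymbol{s}_i$. $P'_{\ell_q/\ell_1}(\boldsymbol{y})$ is the convex program $\min_{\boldsymbol{c}} \sum_{i=1}^n \|\boldsymbol{B}[i]\boldsymbol{c}[i]\|_q$ subject to $\boldsymbol{y} = \boldsymbol{B}\boldsymbol{c}$; $P'_{\ell_q/\ell_0}(\boldsymbol{y})$ is $\min_{\boldsymbol{c}}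 \#\{i : \|\boldsymbol{B}[i]\boldsymbol{c}[i]\|_q \neq 0\}$ subject to $\boldsymbol{y} = \boldsymbol{B}\boldsymbol{c}$. *)

theory Defs
  imports "HOL-Analysis.Analysis"
begin

text \<open>Dictionary: block i (1 \<le> i \<le> n) has columns B i j for j < m i, vectors in R^D = real^'d.
 A coefficient vector c assigns c i j to column j of block i.\<close>

definition qnorm :: "real \<Rightarrow> real^'d \<Rightarrow> real" where
  "qnorm q x = (\<Sum>l\<in>UNIV. \<bar>x $ l\<bar> powr q) powr (1 / q)"

definition blockvec :: "(nat \<Rightarrow> nat \<Rightarrow> real^'d) \<Rightarrow> (nat \<Rightarrow> nat) \<Rightarrow> (nat \<Rightarrow> nat \<Rightarrow> real) \<Rightarrow> nat \<Rightarrow> real^'d" where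
  "blockvec B m c i = (\<Sum>j<m i. c i j *\<^sub>R B i j)"

definition blockspace :: "(nat \<Rightarrow> nat \<Rightarrow> real^'d) \<Rightarrow> (nat \<Rightarrow> nat) \<Rightarrow> nat \<Rightarrow> (real^'d) set" where
  "blockspace B m i = span (B i ` {..<m i})"

definition blocksum :: "(nat \<Rightarrow> nat \<Rightarrow> real^'d) \<Rightarrow> (nat \<Rightarrow> nat) \<Rightarrow> nat set \<Rightarrow> (real^'d) set" where
  "blocksum B m \<Lambda> = {(\<Sum>i\<in>\<Lambda>. s i) | s. \<forall>i\<in>\<Lambda>. s i \<in> blockspace B m i}"

definition block_sparse_rep ::
  "(nat \<Rightarrow> nat \<Rightarrow> real^'d) \<Rightarrow> (nat \<Rightarrow> nat) \<Rightarrow> nat \<Rightarrow> nat \<Rightarrow> real^'d \<Rightarrow> nat set \<Rightarrow> (nat \<Rightarrow> real^'d) \<Rightarrow> bool" where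
  "block_sparse_rep B m n k y \<Lambda> s \<longleftrightarrow>
     \<Lambda> \<subseteq> {1..n} \<and> card \<Lambda> \<le> k \<and>
     (\<forall>i\<in>\<Lambda>. s i \<in> blockspace B m i \<and> s i \<noteq> 0) \<and> y = (\<Sum>i\<in>\<Lambda>. s i)"

definition unique_block_sparse ::
  "(nat \<Rightarrow> nat \<Rightarrow> real^'d) \<Rightarrow> (nat \<Rightarrow> nat) \<Rightarrow> nat \<Rightarrow> nat \<Rightarrow> real^'d \<Rightarrow> bool" where
  "unique_block_sparse B m n k y \<longleftrightarrow>
     (\<forall>\<Lambda> s \<Lambda>' s'. block_sparse_rep B m n k y \<Lambda> s \<and> block_sparse_rep B m n k y \<Lambda>' s'
        \<longrightarrow> \<Lambda> = \<Lambda>' \<and> (\<forall>i\<in>\<Lambda>. s i = s' i))"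

definition feasible :: "(nat \<Rightarrow> nat \<Rightarrow> real^'d) \<Rightarrow> (nat \<Rightarrow> nat) \<Rightarrow> nat \<Rightarrow> real^'d \<Rightarrow> (nat \<Rightarrow> nat \<Rightarrow> real) \<Rightarrow> bool" where
  "feasible B m n y c \<longleftrightarrow> y = (\<Sum>i\<in>{1..n}. blockvec B m c i)"

definition obj_l1 :: "real \<Rightarrow> (nat \<Rightarrow> nat \<Rightarrow> real^'d) \<Rightarrow> (nat \<Rightarrow> nat) \<Rightarrow> nat \<Rightarrow> (nat \<Rightarrow> nat \<Rightarrow> real) \<Rightarrow> real" where
  "obj_l1 q B m n c = (\<Sum>i\<in>{1..n}. qnorm q (blockvec B m c i))"

definition optimal_l1 :: "real \<Rightarrow> (nat \<Rightarrow> nat \<Rightarrow> real^'d) \<Rightarrow> (nat \<Rightarrow> nat) \<Rightarrow> nat \<Rightarrow> real^'d \<Rightarrow> (nat \<Rightarrow> nat \<Rightarrow> real) \<Rightarrow> bool" where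
  "optimal_l1 q B m n y c \<longleftrightarrow> feasible B m n y c \<and>
     (\<forall>c'. feasible B m n y c' \<longrightarrow> obj_l1 q B m n c \<le> obj_l1 q B m n c')"

text \<open>W_\<Lambda>(x): the minimum (written as infimum of the attained set of values).\<close>
definition W :: "real \<Rightarrow> (nat \<Rightarrow> nat \<Rightarrow> real^'d) \<Rightarrow> (nat \<Rightarrow> nat) \<Rightarrow> nat set \<Rightarrow> real^'d \<Rightarrow> real" where
  "W q B m \<Lambda> x = Inf {(\<Sum>i\<in>\<Lambda>. qnorm q (blockvec B m c i)) | c. x = (\<Sum>i\<in>\<Lambda>. blockvec B m c i)}"

end

theory Submission
  imports Defs
begin


lemma qnorm_nonneg: "0 \<le> qnorm q x" by (simp add: qnorm_def)

lemma qnorm_zero: "q > 0 \<Longrightarrow> qnorm q 0 = 0" by (simp add: qnorm_def)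

lemma qnorm_eq0: assumes "q > 0" shows "qnorm q x = 0 \<longleftrightarrow> x = 0"
proof
  assume "qnorm q x = 0"
  hence "(\<Sum>l\<in>UNIV. \<bar>x $ l\<bar> powr q) = 0" by (simp add: qnorm_def)
  hence "\<forall>l\<in>UNIV. \<bar>x $ l\<bar> powr q = 0" by (subst (asm) sum_nonneg_eq_0_iff) auto
  thus "x = 0" by (simp add: vec_eq_iff)
qed (use assms in \<open>simp add: qnorm_zero\<close>)

lemma comp_le_qnorm: assumes "q > 0" shows "\<bar>x $ l\<bar> \<le> qnorm q x"
proof -
  have "\<bar>x $ l\<bar> = (\<bar>x $ l\<bar> powr q) powr (1/q)" using assms by (simp add: powr_powr)
  also have "\<dots> \<le> (\<Sum>l\<in>UNIV. \<bar>x $ l\<bar> powr q) powr (1/q)"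
    using assms by (intro powr_mono2) (auto intro: member_le_sum)
  finally show ?thesis by (simp add: qnorm_def)
qed

lemma norm_le_qnorm: assumes "q > 0" shows "norm (x::real^'d) \<le> real CARD('d) * qnorm q x"
proof -
  have "norm x \<le> (\<Sum>l\<in>UNIV. \<bar>x $ l\<bar>)" by (rule norm_le_l1_cart)
  also have "\<dots> \<le> (\<Sum>l\<in>(UNIV::'d set). qnorm q x)" by (intro sum_mono comp_le_qnorm assms)
  finally show ?thesis by simp
qed

lemma qnorm_cont: assumes "q > 0" shows "continuous_on UNIV (qnorm q :: real^'d \<Rightarrow> real)"
proof -
  have c1: "continuous_on UNIV (\<lambda>x::real^'d. \<bar>x $ l\<bar> powr q)" for l
    using assms by (intro continuous_on_powr' continuous_intros) auto
  have "continuous_on UNIV (\<lambda>x::real^'d. (\<Sum>l\<in>UNIV. \<bar>x $ l\<bar> powr q) powr (1/q))"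
    using assms by (intro continuous_on_powr' continuous_on_sum c1 continuous_intros) (auto intro: sum_nonneg)
  thus ?thesis unfolding qnorm_def[abs_def] .
qed

lemma powr_cvx:
  fixes x y t q :: real
  assumes "q \<ge> 1" "0 \<le> x" "0 \<le> y" "0 \<le> t" "t \<le> 1"
  shows "((1-t)*x + t*y) powr q \<le> (1-t) * x powr q + t * y powr q"
proof -
  have tq: "s powr q \<le> s" if "0 \<le> s" "s \<le> 1" for s :: real
  proof (cases "s = 0")
    case False
    hence "s powr q \<le> s powr 1" using that assms by (intro powr_mono') auto
    thus ?thesis using that by simp
  qed (use assms in auto)
  show ?thesis
  proof (cases "x = 0")
    case True
    have "(t*y) powr q = t powr q * y powr q" using assms by (simp add: powr_mult)
    also have "\<dots> \<le> t * y powr q" using tq[of t] assms by (intro mult_right_mono) auto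
    finally show ?thesis using True assms by simp
  next
    case xne: False
    show ?thesis
    proof (cases "y = 0")
      case True
      have "((1-t)*x) powr q = (1-t) powr q * x powr q" using assms by (simp add: powr_mult)
      also have "\<dots> \<le> (1-t) * x powr q" using tq[of "1-t"] assms by (intro mult_right_mono) auto
      finally show ?thesis using True assms by simp
    next
      case False
      show ?thesis using convex_onD[OF powr_convex[OF assms(1)], of t x y] assms xne False by simp
    qed
  qed
qed

lemma qnorm_triangle: assumes q: "q \<ge> 1" shows "qnorm q (a+b) \<le> qnorm q a + qnorm q (b::real^'d)"
proof (cases "a = 0 \<or> b = 0")
  case True thus ?thesis using q by (auto simp: qnorm_zero)
next
  case False
  define A where "A = qnorm q a"
  define Bb where "Bb = qnorm q b"
  define Sa where "Sa = (\<Sum>l\<in>UNIV. \<bar>a $ l\<bar> powr q)"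
  define Sb where "Sb = (\<Sum>l\<in>UNIV. \<bar>b $ l\<bar> powr q)"
  have Ap: "A > 0" using False q qnorm_eq0[of q a] qnorm_nonneg[of q a] unfolding A_def by linarith
  have Bp: "Bb > 0" using False q qnorm_eq0[of q b] qnorm_nonneg[of q b] unfolding Bb_def by linarith
  have SaA: "Sa = A powr q" unfolding A_def qnorm_def Sa_def[symmetric] using q
    by (simp add: powr_powr Sa_def sum_nonneg)
  have SbB: "Sb = Bb powr q" unfolding Bb_def qnorm_def Sb_def[symmetric] using q
    by (simp add: powr_powr Sb_def sum_nonneg)
  define t where "t = Bb / (A + Bb)"
  have t0: "0 \<le> t" "t \<le> 1" using Ap Bp by (auto simp: t_def)
  have pt: "\<bar>(a+b) $ l\<bar> powr q \<le> (A+Bb) powr q * ((1-t) * \<bar>a $ l\<bar> powr q / A powr q + t * \<bar>b $ l\<bar> powr q / Bb powr q)" for l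
  proof -
    have e: "\<bar>a $ l\<bar> + \<bar>b $ l\<bar> = (A+Bb) * ((1-t) * (\<bar>a $ l\<bar>/A) + t * (\<bar>b $ l\<bar>/Bb))"
    proof -
      have "1 - t = A / (A+Bb)" using Ap Bp by (simp add: t_def field_simps)
      have "(A+Bb) * ((A/(A+Bb)) * (\<bar>a $ l\<bar>/A) + (Bb/(A+Bb)) * (\<bar>b $ l\<bar>/Bb))
          = ((A+Bb) * (A/(A+Bb))) * (\<bar>a $ l\<bar>/A) + ((A+Bb) * (Bb/(A+Bb))) * (\<bar>b $ l\<bar>/Bb)"
        by (simp only: distrib_left mult.assoc)
      also have "\<dots> = \<bar>a $ l\<bar> + \<bar>b $ l\<bar>" using Ap Bp by simp
      finally show ?thesis using \<open>1 - t = A / (A+Bb)\<close> by (simp add: t_def)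
    qed
    have "\<bar>(a+b) $ l\<bar> powr q \<le> (\<bar>a $ l\<bar> + \<bar>b $ l\<bar>) powr q"
      using q by (intro powr_mono2) (auto simp: abs_triangle_ineq)
    also have "\<dots> = (A+Bb) powr q * ((1-t) * (\<bar>a $ l\<bar>/A) + t * (\<bar>b $ l\<bar>/Bb)) powr q"
      unfolding e using Ap Bp t0 by (subst powr_mult) auto
    also have "\<dots> \<le> (A+Bb) powr q * ((1-t) * (\<bar>a $ l\<bar>/A) powr q + t * (\<bar>b $ l\<bar>/Bb) powr q)"
      using Ap Bp t0 q by (intro mult_left_mono powr_cvx) auto
    also have "\<dots> = (A+Bb) powr q * ((1-t) * \<bar>a $ l\<bar> powr q / A powr q + t * \<bar>b $ l\<bar> powr q / Bb powr q)"
      using Ap Bp by (simp add: powr_divide)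
    finally show ?thesis .
  qed
  have "(\<Sum>l\<in>UNIV. \<bar>(a+b) $ l\<bar> powr q) \<le> (\<Sum>l\<in>UNIV. (A+Bb) powr q * ((1-t) * \<bar>a $ l\<bar> powr q / A powr q + t * \<bar>b $ l\<bar> powr q / Bb powr q))"
    by (intro sum_mono pt)
  also have "\<dots> = (A+Bb) powr q * ((1-t) * Sa / A powr q + t * Sb / Bb powr q)"
    by (simp add: sum_distrib_left sum_distrib_right sum.distrib sum_divide_distrib Sa_def Sb_def algebra_simps)
  also have "\<dots> = (A+Bb) powr q" using Ap Bp by (simp add: SaA SbB)
  finally have le: "(\<Sum>l\<in>UNIV. \<bar>(a+b) $ l\<bar> powr q) \<le> (A+Bb) powr q" .
  have "qnorm q (a+b) \<le> ((A+Bb) powr q) powr (1/q)"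
    unfolding qnorm_def using q le by (intro powr_mono2) (auto intro: sum_nonneg)
  also have "\<dots> = A + Bb" using Ap Bp q by (simp add: powr_powr)
  finally show ?thesis by (simp add: A_def Bb_def)
qed



definition rep :: "(nat \<Rightarrow> nat \<Rightarrow> real^'d) \<Rightarrow> (nat \<Rightarrow> nat) \<Rightarrow> nat set \<Rightarrow> real^'d \<Rightarrow> (nat \<Rightarrow> real^'d) \<Rightarrow> bool" where
  "rep B m I x s \<longleftrightarrow> (\<forall>i\<in>I. s i \<in> blockspace B m i) \<and> x = (\<Sum>i\<in>I. s i)"

lemma span_rep:
  assumes "v \<in> blockspace B m i"
  shows "\<exists>a. v = (\<Sum>j<m i. a j *\<^sub>R B i j)"
  using assms unfolding blockspace_def
proof (induction rule: span_induct_alt)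
  case base
  show ?case by (rule exI[of _ "\<lambda>j. 0"]) simp
next
  case (step c x y)
  then obtain j0 where j0: "j0 < m i" "x = B i j0" by auto
  from step obtain a where a: "y = (\<Sum>j<m i. a j *\<^sub>R B i j)" by auto
  have e1: "(\<Sum>j<m i. (a j + (if j = j0 then c else 0)) *\<^sub>R B i j)
     = (\<Sum>j<m i. a j *\<^sub>R B i j) + (\<Sum>j<m i. (if j = j0 then c else 0) *\<^sub>R B i j)"
    by (simp only: scaleR_add_left sum.distrib)
  have e2: "(\<Sum>j<m i. (if j = j0 then c else 0) *\<^sub>R B i j) = (\<Sum>j<m i. (if j = j0 then c *\<^sub>R B i j else 0))"
    by (intro sum.cong) auto
  have e3: "(\<Sum>j<m i. (if j = j0 then c *\<^sub>R B i j else 0)) = c *\<^sub>R B i j0"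
    using j0(1) by (subst sum.delta) auto
  have "c *\<^sub>R x + y = (\<Sum>j<m i. (a j + (if j = j0 then c else 0)) *\<^sub>R B i j)"
    unfolding e1 e2 e3 using j0 a by simp
  thus ?case by (rule exI[of _ "\<lambda>j. a j + (if j = j0 then c else 0)"])
qed

lemma blockvec_in: "blockvec B m c i \<in> blockspace B m i"
  unfolding blockvec_def blockspace_def
  by (intro span_sum span_scale span_base) auto

lemma rep_coeffs:
  assumes "\<forall>i\<in>I. s i \<in> blockspace B m i"
  shows "\<exists>c. \<forall>i\<in>I. blockvec B m c i = s i"
proof -
  have "\<forall>i\<in>I. \<exists>a. s i = (\<Sum>j<m i. a j *\<^sub>R B i j)" using assms span_rep by blast
  then obtain f where f: "\<forall>i\<in>I. s i = (\<Sum>j<m i. f i j *\<^sub>R B i j)" by metis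
  thus ?thesis unfolding blockvec_def by (intro exI[of _ f]) auto
qed

lemma common_subseq:
  fixes f :: "nat \<Rightarrow> nat \<Rightarrow> real^'d"
  assumes "finite I" "\<forall>i\<in>I. bounded (range (\<lambda>k. f k i))"
  shows "\<exists>r l. strict_mono r \<and> (\<forall>i\<in>I. (\<lambda>k. f (r k) i) \<longlonglongrightarrow> l i)"
  using assms
proof (induction I rule: finite_induct)
  case empty
  show ?case by (intro exI[of _ id]) (auto simp: strict_mono_def)
next
  case (insert a I)
  then obtain r l where r: "strict_mono r" "\<forall>i\<in>I. (\<lambda>k. f (r k) i) \<longlonglongrightarrow> l i" by auto
  have "bounded (range (\<lambda>k. f (r k) a))"
    using insert(4) by (auto intro: bounded_subset[of "range (\<lambda>k. f k a)"])
  then obtain la r2 where r2: "strict_mono r2" "((\<lambda>k. f (r k) a) \<circ> r2) \<longlonglongrightarrow> la"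
    using bounded_imp_convergent_subsequence by blast
  have "strict_mono (r \<circ> r2)" using r(1) r2(1) by (rule strict_mono_o)
  moreover have "\<forall>i\<in>insert a I. (\<lambda>k. f ((r \<circ> r2) k) i) \<longlonglongrightarrow> (l(a := la)) i"
  proof
    fix i assume "i \<in> insert a I"
    show "(\<lambda>k. f ((r \<circ> r2) k) i) \<longlonglongrightarrow> (l(a := la)) i"
    proof (cases "i = a")
      case True thus ?thesis using r2(2) by (simp add: o_def)
    next
      case False
      hence "i \<in> I" using \<open>i \<in> insert a I\<close> by auto
      from LIMSEQ_subseq_LIMSEQ[OF r(2)[rule_format, OF this] r2(1)]
      show ?thesis using False by (simp add: o_def)
    qed
  qed
  ultimately show ?case by blast
qed

lemma exists_min:
  fixes B :: "nat \<Rightarrow> nat \<Rightarrow> real^'d"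
  assumes q: "q \<ge> 1" and fin: "finite I" and r0: "rep B m I x s0"
  shows "\<exists>s. rep B m I x s \<and> (\<forall>s'. rep B m I x s' \<longrightarrow> (\<Sum>i\<in>I. qnorm q (s i)) \<le> (\<Sum>i\<in>I. qnorm q (s' i)))"
proof -
  define C where "C = {(\<Sum>i\<in>I. qnorm q (s i)) | s. rep B m I x s}"
  define V where "V = Inf C"
  have Cne: "C \<noteq> {}" using r0 by (auto simp: C_def)
  have Cbdd: "bdd_below C" unfolding C_def
    by (rule bdd_belowI[of _ 0]) (auto intro: sum_nonneg qnorm_nonneg)
  have "\<forall>k. \<exists>s. rep B m I x s \<and> (\<Sum>i\<in>I. qnorm q (s i)) < V + inverse (real (Suc k))"
  proof
    fix k
    have "Inf C < V + inverse (real (Suc k))" by (simp add: V_def)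
    from cInf_lessD[OF Cne this] obtain y where "y \<in> C" "y < V + inverse (real (Suc k))" by blast
    then obtain s where "rep B m I x s" "y = (\<Sum>i\<in>I. qnorm q (s i))" unfolding C_def by blast
    thus "\<exists>s. rep B m I x s \<and> (\<Sum>i\<in>I. qnorm q (s i)) < V + inverse (real (Suc k))"
      using \<open>y < _\<close> by blast
  qed
  from choice[OF this] obtain sq where sq0: "\<forall>k. rep B m I x (sq k) \<and> (\<Sum>i\<in>I. qnorm q (sq k i)) < V + inverse (real (Suc k))"
    by blast
  have sq: "\<And>k. rep B m I x (sq k)" "\<And>k. (\<Sum>i\<in>I. qnorm q (sq k i)) < V + inverse (real (Suc k))"
    using sq0 by auto
  have bnd: "norm (sq k i) \<le> real CARD('d) * (V + 1)" if "i \<in> I" for k i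
  proof -
    have "qnorm q (sq k i) \<le> (\<Sum>i\<in>I. qnorm q (sq k i))"
      using fin that by (intro member_le_sum) (auto intro: qnorm_nonneg)
    also have "\<dots> \<le> V + 1"
    proof -
      have "inverse (real (Suc k)) \<le> 1" by (simp add: inverse_le_1_iff)
      thus ?thesis using sq(2)[of k] by linarith
    qed
    finally have "qnorm q (sq k i) \<le> V + 1" .
    hence "real CARD('d) * qnorm q (sq k i) \<le> real CARD('d) * (V + 1)" by (intro mult_left_mono) auto
    moreover have "norm (sq k i) \<le> real CARD('d) * qnorm q (sq k i)" using q by (intro norm_le_qnorm) auto
    ultimately show ?thesis by linarith
  qed
  have "\<forall>i\<in>I. bounded (range (\<lambda>k. sq k i))"
    using bnd unfolding bounded_iff by blast
  then obtain r l where r: "strict_mono r" "\<forall>i\<in>I. (\<lambda>k. sq (r k) i) \<longlonglongrightarrow> l i"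
    using common_subseq[OF fin] by blast
  have lin: "l i \<in> blockspace B m i" if "i \<in> I" for i
  proof -
    have "closed (blockspace B m i)" unfolding blockspace_def by (intro closed_subspace subspace_span)
    moreover have "\<forall>k. sq (r k) i \<in> blockspace B m i" using sq(1) that by (auto simp: rep_def)
    ultimately show ?thesis using r(2) that closed_sequentially[of "blockspace B m i" "\<lambda>k. sq (r k) i" "l i"] by blast
  qed
  have "(\<lambda>k. \<Sum>i\<in>I. sq (r k) i) \<longlonglongrightarrow> (\<Sum>i\<in>I. l i)"
    using r(2) by (intro tendsto_sum) auto
  moreover have "(\<lambda>k. \<Sum>i\<in>I. sq (r k) i) = (\<lambda>k. x)" using sq(1) by (auto simp: rep_def)
  ultimately have "(\<lambda>k. x) \<longlonglongrightarrow> (\<Sum>i\<in>I. l i)" by simp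
  hence "x = (\<Sum>i\<in>I. l i)" using LIMSEQ_unique[OF tendsto_const] by blast
  with lin have repl: "rep B m I x l" by (auto simp: rep_def)
  have cont: "isCont (qnorm q :: real^'d \<Rightarrow> real) v" for v
    using qnorm_cont[of q] q continuous_on_eq_continuous_at[of UNIV] by auto
  have lim1: "(\<lambda>k. \<Sum>i\<in>I. qnorm q (sq (r k) i)) \<longlonglongrightarrow> (\<Sum>i\<in>I. qnorm q (l i))"
    using r(2) by (intro tendsto_sum isCont_tendsto_compose[OF cont]) auto
  have lim2: "(\<lambda>k. V + inverse (real (Suc k))) \<longlonglongrightarrow> V + 0"
    by (intro tendsto_add tendsto_const LIMSEQ_inverse_real_of_nat)
  have "(\<Sum>i\<in>I. qnorm q (sq (r k) i)) \<le> V + inverse (real (Suc k))" for k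
  proof -
    have "k \<le> r k" using r(1) by (rule seq_suble)
    hence "inverse (real (Suc (r k))) \<le> inverse (real (Suc k))" by (intro le_imp_inverse_le) auto
    thus ?thesis using sq(2)[of "r k"] by linarith
  qed
  hence "(\<Sum>i\<in>I. qnorm q (l i)) \<le> V + 0" using LIMSEQ_le[OF lim1 lim2] by auto
  hence lV: "(\<Sum>i\<in>I. qnorm q (l i)) \<le> V" by simp
  show ?thesis
  proof (intro exI conjI allI impI)
    show "rep B m I x l" by (rule repl)
    fix s' assume "rep B m I x s'"
    hence "(\<Sum>i\<in>I. qnorm q (s' i)) \<in> C" by (auto simp: C_def)
    hence "V \<le> (\<Sum>i\<in>I. qnorm q (s' i))" unfolding V_def using Cbdd by (rule cInf_lower)
    thus "(\<Sum>i\<in>I. qnorm q (l i)) \<le> (\<Sum>i\<in>I. qnorm q (s' i))" using lV by linarith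
  qed
qed



lemma blocksum_iff: "x \<in> blocksum B m I \<longleftrightarrow> (\<exists>s. rep B m I x s)"
  by (auto simp: blocksum_def rep_def)

lemma rep_ext:
  assumes "rep B m I x s" "I \<subseteq> N" "finite N"
  shows "rep B m N x (\<lambda>i. if i \<in> I then s i else 0)"
proof -
  have "(\<Sum>i\<in>N. if i \<in> I then s i else 0) = sum s (N \<inter> I)" by (rule sum.inter_restrict[symmetric]) fact
  also have "N \<inter> I = I" using assms(2) by blast
  finally show ?thesis using assms(1) by (auto simp: rep_def blockspace_def span_zero)
qed

lemma cost_ext:
  assumes "I \<subseteq> N" "finite N" "q > 0"
  shows "(\<Sum>i\<in>N. qnorm q (if i \<in> I then s i else 0)) = (\<Sum>i\<in>I. qnorm q (s i))"
proof -
  have "(\<Sum>i\<in>N. qnorm q (if i \<in> I then s i else 0)) = (\<Sum>i\<in>N. if i \<in> I then qnorm q (s i) else 0)"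
    using assms by (intro sum.cong) (auto simp: qnorm_zero)
  also have "\<dots> = sum (\<lambda>i. qnorm q (s i)) (N \<inter> I)" by (rule sum.inter_restrict[symmetric]) fact
  also have "N \<inter> I = I" using assms(1) by blast
  finally show ?thesis .
qed

lemma W_le:
  assumes "x = (\<Sum>i\<in>I. blockvec B m c i)"
  shows "W q B m I x \<le> (\<Sum>i\<in>I. qnorm q (blockvec B m c i))"
  unfolding W_def
  by (rule cInf_lower) (use assms in \<open>auto intro!: bdd_belowI[of _ 0] sum_nonneg qnorm_nonneg\<close>)

lemma W_eq_min:
  assumes "rep B m I x t" "\<forall>s'. rep B m I x s' \<longrightarrow> (\<Sum>i\<in>I. qnorm q (t i)) \<le> (\<Sum>i\<in>I. qnorm q (s' i))"
  shows "W q B m I x = (\<Sum>i\<in>I. qnorm q (t i))"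
proof -
  obtain c where c: "\<forall>i\<in>I. blockvec B m c i = t i" using rep_coeffs assms(1) unfolding rep_def by blast
  show ?thesis unfolding W_def
  proof (rule cInf_eq_minimum)
    have "x = (\<Sum>i\<in>I. blockvec B m c i)" using c assms(1) by (simp add: rep_def)
    moreover have "(\<Sum>i\<in>I. qnorm q (t i)) = (\<Sum>i\<in>I. qnorm q (blockvec B m c i))" using c by simp
    ultimately show "(\<Sum>i\<in>I. qnorm q (t i)) \<in> {\<Sum>i\<in>I. qnorm q (blockvec B m c i) |c. x = (\<Sum>i\<in>I. blockvec B m c i)}"
      by blast
  next
    fix y assume "y \<in> {\<Sum>i\<in>I. qnorm q (blockvec B m c i) |c. x = (\<Sum>i\<in>I. blockvec B m c i)}"
    then obtain c' where "y = (\<Sum>i\<in>I. qnorm q (blockvec B m c' i))" "x = (\<Sum>i\<in>I. blockvec B m c' i)" by blast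
    moreover have "rep B m I x (blockvec B m c')" using calculation(2) by (simp add: rep_def blockvec_in)
    ultimately show "(\<Sum>i\<in>I. qnorm q (t i)) \<le> y" using assms(2) by auto
  qed
qed

lemma min_to_opt:
  assumes "rep B m {1..n} x s" "\<forall>s'. rep B m {1..n} x s' \<longrightarrow> (\<Sum>i\<in>{1..n}. qnorm q (s i)) \<le> (\<Sum>i\<in>{1..n}. qnorm q (s' i))"
  shows "\<exists>c. optimal_l1 q B m n x c \<and> (\<forall>i\<in>{1..n}. blockvec B m c i = s i)"
proof -
  obtain c where c: "\<forall>i\<in>{1..n}. blockvec B m c i = s i" using rep_coeffs assms(1) unfolding rep_def by blast
  have "optimal_l1 q B m n x c"
    unfolding optimal_l1_def feasible_def obj_l1_def
  proof (intro conjI allI impI)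
    show "x = (\<Sum>i\<in>{1..n}. blockvec B m c i)" using c assms(1) by (simp add: rep_def)
    fix c' assume "x = (\<Sum>i\<in>{1..n}. blockvec B m c' i)"
    hence "rep B m {1..n} x (blockvec B m c')" by (simp add: rep_def blockvec_in)
    thus "(\<Sum>i\<in>{1..n}. qnorm q (blockvec B m c i)) \<le> (\<Sum>i\<in>{1..n}. qnorm q (blockvec B m c' i))"
      using assms(2) c by auto
  qed
  thus ?thesis using c by blast
qed



theorem theorem2:
  fixes q :: real and n k :: nat and m :: "nat \<Rightarrow> nat"
    and B :: "nat \<Rightarrow> nat \<Rightarrow> real^'d"
  assumes hq: "q \<ge> 1"
    and hk: "0 < k" "k < n"
    and unit: "\<And>i j. i \<in> {1..n} \<Longrightarrow> j < m i \<Longrightarrow> norm (B i j) = 1"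
    and disj: "\<And>i j. i \<in> {1..n} \<Longrightarrow> j \<in> {1..n} \<Longrightarrow> i \<noteq> j \<Longrightarrow>
                 blockspace B m i \<inter> blockspace B m j = {0}"
    and uniq: "\<And>y. (\<exists>\<Lambda> s. block_sparse_rep B m n k y \<Lambda> s) \<Longrightarrow> unique_block_sparse B m n k y"
  shows "(\<forall>\<Lambda>. \<Lambda> \<subseteq> {1..n} \<and> card \<Lambda> = k \<longrightarrow>
            (\<forall>y \<in> blocksum B m \<Lambda>. \<forall>c. optimal_l1 q B m n y c \<longrightarrow>
               (\<forall>i \<in> {1..n} - \<Lambda>. blockvec B m c i = 0)))
     \<longleftrightarrow>
         (\<forall>\<Lambda>. \<Lambda> \<subseteq> {1..n} \<and> card \<Lambda> = k \<longrightarrow>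
            (\<forall>x \<in> blocksum B m \<Lambda> \<inter> blocksum B m ({1..n} - \<Lambda>). x \<noteq> 0 \<longrightarrow>
               W q B m \<Lambda> x < W q B m ({1..n} - \<Lambda>) x))"
proof
  assume L: "\<forall>\<Lambda>. \<Lambda> \<subseteq> {1..n} \<and> card \<Lambda> = k \<longrightarrow>
            (\<forall>y \<in> blocksum B m \<Lambda>. \<forall>c. optimal_l1 q B m n y c \<longrightarrow>
               (\<forall>i \<in> {1..n} - \<Lambda>. blockvec B m c i = 0))"
  show "\<forall>\<Lambda>. \<Lambda> \<subseteq> {1..n} \<and> card \<Lambda> = k \<longrightarrow>
            (\<forall>x \<in> blocksum B m \<Lambda> \<inter> blocksum B m ({1..n} - \<Lambda>). x \<noteq> 0 \<longrightarrow>
               W q B m \<Lambda> x < W q B m ({1..n} - \<Lambda>) x)"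
  proof (intro allI impI ballI)
    fix \<Lambda> x
    assume Lam: "\<Lambda> \<subseteq> {1..n} \<and> card \<Lambda> = k"
      and x: "x \<in> blocksum B m \<Lambda> \<inter> blocksum B m ({1..n} - \<Lambda>)" and xne: "x \<noteq> 0"
    define N where "N = {1..n::nat}"
    have finN: "finite N" by (simp add: N_def)
    have LN: "\<Lambda> \<subseteq> N" using Lam by (simp add: N_def)
    have finL: "finite \<Lambda>" using LN finN finite_subset by blast
    have q0: "q > 0" using hq by simp
    have split: "sum f N = sum f \<Lambda> + sum f (N - \<Lambda>)" for f :: "nat \<Rightarrow> 'z::comm_monoid_add"
      using sum.subset_diff[OF LN finN] by (simp add: add.commute)
    obtain u where u: "rep B m \<Lambda> x u" using x blocksum_iff by blast
    have "rep B m N x (\<lambda>i. if i \<in> \<Lambda> then u i else 0)" by (rule rep_ext[OF u LN finN])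
    from exists_min[OF hq finN this] obtain s where
      s: "rep B m N x s" "\<forall>s'. rep B m N x s' \<longrightarrow> (\<Sum>i\<in>N. qnorm q (s i)) \<le> (\<Sum>i\<in>N. qnorm q (s' i))"
      by blast
    from min_to_opt[of B m n x s q] s obtain c where c: "optimal_l1 q B m n x c" "\<forall>i\<in>N. blockvec B m c i = s i"
      unfolding N_def by blast
    have xL: "x \<in> blocksum B m \<Lambda>" using x by blast
    have "\<forall>i\<in>N - \<Lambda>. blockvec B m c i = 0" using L[rule_format, OF Lam xL c(1)] by (simp add: N_def)
    hence s0: "\<forall>i\<in>N - \<Lambda>. s i = 0" using c(2) by auto
    have costs: "(\<Sum>i\<in>N. qnorm q (s i)) = (\<Sum>i\<in>\<Lambda>. qnorm q (blockvec B m c i))"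
      using split[of "\<lambda>i. qnorm q (s i)"] s0 c(2) LN q0 by (simp add: qnorm_zero, intro sum.cong) auto
    have "(\<Sum>i\<in>N - \<Lambda>. s i) = 0" using s0 by simp
    hence "x = (\<Sum>i\<in>\<Lambda>. s i)" using split[of s] s(1) by (simp add: rep_def)
    also have "\<dots> = (\<Sum>i\<in>\<Lambda>. blockvec B m c i)" using c(2) LN by (intro sum.cong) auto
    finally have "W q B m \<Lambda> x \<le> (\<Sum>i\<in>\<Lambda>. qnorm q (blockvec B m c i))" by (rule W_le)
    hence WL: "W q B m \<Lambda> x \<le> (\<Sum>i\<in>N. qnorm q (s i))" using costs by simp
    show "W q B m \<Lambda> x < W q B m ({1..n} - \<Lambda>) x"
    proof (rule ccontr)
      assume "\<not> ?thesis"
      hence le: "W q B m (N - \<Lambda>) x \<le> W q B m \<Lambda> x" by (simp add: N_def)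
      obtain v where v: "rep B m (N - \<Lambda>) x v" using x blocksum_iff unfolding N_def by blast
      from exists_min[OF hq _ v] finN obtain t where
        t: "rep B m (N - \<Lambda>) x t" "\<forall>s'. rep B m (N - \<Lambda>) x s' \<longrightarrow> (\<Sum>i\<in>N - \<Lambda>. qnorm q (t i)) \<le> (\<Sum>i\<in>N - \<Lambda>. qnorm q (s' i))"
        by blast
      have Wt: "W q B m (N - \<Lambda>) x = (\<Sum>i\<in>N - \<Lambda>. qnorm q (t i))" by (rule W_eq_min[OF t])
      define t0 where "t0 = (\<lambda>i. if i \<in> N - \<Lambda> then t i else 0)"
      have rt0: "rep B m N x t0" unfolding t0_def by (rule rep_ext[OF t(1)]) (use finN in auto)
      have ct0: "(\<Sum>i\<in>N. qnorm q (t0 i)) = (\<Sum>i\<in>N - \<Lambda>. qnorm q (t i))"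
        unfolding t0_def by (rule cost_ext) (use finN q0 in auto)
      have "\<forall>s'. rep B m N x s' \<longrightarrow> (\<Sum>i\<in>N. qnorm q (t0 i)) \<le> (\<Sum>i\<in>N. qnorm q (s' i))"
      proof (intro allI impI)
        fix s' assume "rep B m N x s'"
        hence "(\<Sum>i\<in>N. qnorm q (s i)) \<le> (\<Sum>i\<in>N. qnorm q (s' i))" using s(2) by blast
        thus "(\<Sum>i\<in>N. qnorm q (t0 i)) \<le> (\<Sum>i\<in>N. qnorm q (s' i))" using ct0 Wt le WL by linarith
      qed
      from min_to_opt[of B m n x t0 q] rt0 this obtain c2 where
        c2: "optimal_l1 q B m n x c2" "\<forall>i\<in>N. blockvec B m c2 i = t0 i"
        unfolding N_def by blast
      have "\<forall>i\<in>N - \<Lambda>. blockvec B m c2 i = 0"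
        using L[rule_format, OF Lam \<open>x \<in> blocksum B m \<Lambda>\<close> c2(1)] by (simp add: N_def)
      hence "\<forall>i\<in>N - \<Lambda>. t0 i = 0" using c2(2) by auto
      hence "\<forall>i\<in>N - \<Lambda>. t i = 0" by (simp add: t0_def)
      hence "x = 0" using t(1) by (simp add: rep_def)
      thus False using xne by simp
    qed
  qed
next
  assume R: "\<forall>\<Lambda>. \<Lambda> \<subseteq> {1..n} \<and> card \<Lambda> = k \<longrightarrow>
            (\<forall>x \<in> blocksum B m \<Lambda> \<inter> blocksum B m ({1..n} - \<Lambda>). x \<noteq> 0 \<longrightarrow>
               W q B m \<Lambda> x < W q B m ({1..n} - \<Lambda>) x)"
  show "\<forall>\<Lambda>. \<Lambda> \<subseteq> {1..n} \<and> card \<Lambda> = k \<longrightarrow>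
            (\<forall>y \<in> blocksum B m \<Lambda>. \<forall>c. optimal_l1 q B m n y c \<longrightarrow>
               (\<forall>i \<in> {1..n} - \<Lambda>. blockvec B m c i = 0))"
  proof (intro allI impI ballI)
    fix \<Lambda> y c i0
    assume Lam: "\<Lambda> \<subseteq> {1..n} \<and> card \<Lambda> = k" and y: "y \<in> blocksum B m \<Lambda>"
      and opt: "optimal_l1 q B m n y c" and i0: "i0 \<in> {1..n} - \<Lambda>"
    show "blockvec B m c i0 = 0"
    proof (rule ccontr)
      assume ne: "blockvec B m c i0 \<noteq> 0"
      define N where "N = {1..n::nat}"
      have finN: "finite N" by (simp add: N_def)
      have LN: "\<Lambda> \<subseteq> N" using Lam by (simp add: N_def)
      have finL: "finite \<Lambda>" using LN finN finite_subset by blast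
      have q0: "q > 0" using hq by simp
      have split: "sum f N = sum f \<Lambda> + sum f (N - \<Lambda>)" for f :: "nat \<Rightarrow> 'z::comm_monoid_add"
        using sum.subset_diff[OF LN finN] by (simp add: add.commute)
      let ?bc = "blockvec B m c"
      define x where "x = (\<Sum>i\<in>N - \<Lambda>. ?bc i)"
      obtain u where u: "rep B m \<Lambda> y u" using y blocksum_iff by blast
      have yN: "y = (\<Sum>i\<in>N. ?bc i)" using opt by (simp add: optimal_l1_def feasible_def N_def)
      have xL: "x = (\<Sum>i\<in>\<Lambda>. u i - ?bc i)"
        using yN split[of ?bc] u by (simp add: x_def rep_def sum_subtractf) (metis add_diff_cancel_left')
      have pos: "0 < (\<Sum>i\<in>N - \<Lambda>. qnorm q (?bc i))"
      proof -
        have "0 < qnorm q (?bc i0)" using ne qnorm_eq0[OF q0] qnorm_nonneg[of q] by (metis less_eq_real_def)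
        also have "\<dots> \<le> (\<Sum>i\<in>N - \<Lambda>. qnorm q (?bc i))"
          using i0 finN by (intro member_le_sum) (auto simp: N_def qnorm_nonneg)
        finally show ?thesis .
      qed
      have "\<exists>d. x = (\<Sum>i\<in>\<Lambda>. blockvec B m d i) \<and> (\<Sum>i\<in>\<Lambda>. qnorm q (blockvec B m d i)) < (\<Sum>i\<in>N - \<Lambda>. qnorm q (?bc i))"
      proof (cases "x = 0")
        case True
        have "blockvec B m (\<lambda>i j. 0) i = 0" for i by (simp add: blockvec_def)
        thus ?thesis using True pos q0 by (intro exI[of _ "\<lambda>i j. 0"]) (simp add: qnorm_zero)
      next
        case False
        have "rep B m \<Lambda> x (\<lambda>i. u i - ?bc i)"
          unfolding rep_def
        proof (intro conjI ballI)
          show "x = (\<Sum>i\<in>\<Lambda>. u i - ?bc i)" by (rule xL)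
          show "u i - ?bc i \<in> blockspace B m i" if "i \<in> \<Lambda>" for i
            using u that blockvec_in[of B m c i] unfolding rep_def blockspace_def by (auto intro: span_diff)
        qed
        moreover have "rep B m ({1..n} - \<Lambda>) x ?bc"
          unfolding rep_def by (simp add: x_def N_def blockvec_in)
        ultimately have xin: "x \<in> blocksum B m \<Lambda> \<inter> blocksum B m ({1..n} - \<Lambda>)"
          using blocksum_iff by blast
        have "W q B m \<Lambda> x < W q B m ({1..n} - \<Lambda>) x" using R[rule_format, OF Lam xin False] .
        also have "\<dots> \<le> (\<Sum>i\<in>N - \<Lambda>. qnorm q (?bc i))" unfolding N_def by (rule W_le) (simp add: x_def N_def)
        finally have lt: "W q B m \<Lambda> x < (\<Sum>i\<in>N - \<Lambda>. qnorm q (?bc i))" .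
        have "{\<Sum>i\<in>\<Lambda>. qnorm q (blockvec B m c i) |c. x = (\<Sum>i\<in>\<Lambda>. blockvec B m c i)} \<noteq> {}"
        proof -
          obtain s where "rep B m \<Lambda> x s" using xin blocksum_iff by blast
          then obtain d where "\<forall>i\<in>\<Lambda>. blockvec B m d i = s i" using rep_coeffs unfolding rep_def by blast
          hence "x = (\<Sum>i\<in>\<Lambda>. blockvec B m d i)" using \<open>rep B m \<Lambda> x s\<close> by (simp add: rep_def)
          thus ?thesis by blast
        qed
        from cInf_lessD[OF this lt[unfolded W_def]] show ?thesis by blast
      qed
      then obtain d where d: "x = (\<Sum>i\<in>\<Lambda>. blockvec B m d i)"
        "(\<Sum>i\<in>\<Lambda>. qnorm q (blockvec B m d i)) < (\<Sum>i\<in>N - \<Lambda>. qnorm q (?bc i))" by blast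
      define c' where "c' = (\<lambda>i j. if i \<in> \<Lambda> then c i j + d i j else 0)"
      have bc': "blockvec B m c' i = (if i \<in> \<Lambda> then ?bc i + blockvec B m d i else 0)" for i
        by (simp add: c'_def blockvec_def scaleR_add_left sum.distrib)
      have "(\<Sum>i\<in>N. blockvec B m c' i) = sum (\<lambda>i. ?bc i + blockvec B m d i) (N \<inter> \<Lambda>)"
        unfolding bc' by (rule sum.inter_restrict[symmetric]) fact
      also have "N \<inter> \<Lambda> = \<Lambda>" using LN by blast
      also have "(\<Sum>i\<in>\<Lambda>. ?bc i + blockvec B m d i) = (\<Sum>i\<in>\<Lambda>. ?bc i) + x"
        by (simp add: sum.distrib d(1))
      also have "\<dots> = y" using yN split[of ?bc] by (simp add: x_def)
      finally have feas: "feasible B m n y c'" by (simp add: feasible_def N_def)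
      have "obj_l1 q B m n c' = (\<Sum>i\<in>N. qnorm q (if i \<in> \<Lambda> then ?bc i + blockvec B m d i else 0))"
        by (simp add: obj_l1_def bc' N_def)
      also have "\<dots> = (\<Sum>i\<in>\<Lambda>. qnorm q (?bc i + blockvec B m d i))"
        by (rule cost_ext) (use LN finN q0 in auto)
      also have "\<dots> \<le> (\<Sum>i\<in>\<Lambda>. qnorm q (?bc i) + qnorm q (blockvec B m d i))"
        by (intro sum_mono qnorm_triangle hq)
      also have "\<dots> = (\<Sum>i\<in>\<Lambda>. qnorm q (?bc i)) + (\<Sum>i\<in>\<Lambda>. qnorm q (blockvec B m d i))"
        by (rule sum.distrib)
      also have "\<dots> < (\<Sum>i\<in>\<Lambda>. qnorm q (?bc i)) + (\<Sum>i\<in>N - \<Lambda>. qnorm q (?bc i))"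
        using d(2) by linarith
      also have "\<dots> = obj_l1 q B m n c" using split[of "\<lambda>i. qnorm q (?bc i)"] by (simp add: obj_l1_def N_def)
      finally have "obj_l1 q B m n c' < obj_l1 q B m n c" .
      moreover have "obj_l1 q B m n c \<le> obj_l1 q B m n c'" using opt feas by (simp add: optimal_l1_def)
      ultimately show False by linarith
    qed
  qed
qed

end
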